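(* Consider the algorithm in the context with $S=I_n$ and one-shot noise: for each $i$, $\eta_i(0)\sim\mathrm{Lap}(c_i)$ with $c_i>0$, and $\eta_i(k)=0$ for all $k\ge1$, the $\eta_i(0)$ being independent. Then for each $i$ the algorithm preserves $\epsilon_i$-differential privacy of agent $i$'s initial state with $\epsilon_i=\delta/c_i$ (i.e., for any two initial states differing only in component $i$ by at most $\delta$ and any Borel $\mathcal{O}\subseteq(\mathbb{R}^n)^{\mathbb{N}}$, $\mathbb{P}\{X_{\theta_0^{(1)}}(\boldsymbol\eta)\in\mathcal{O}\}\le e^{\epsilon_i}\mathbb{P}\{X_{\theta_0^{(2)}}(\boldsymbol\eta)\in\mathcal{O}\}$), and $\theta(k)\to\theta_\infty\mathbf{1}_n$ with $\theta_\infty=\mathrm{Ave}(\theta_0)+\frac1n\sum_i\eta_i(0)$, whose variance is $\frac{2}{n^2}\sum_{i=1}^nc_i^2=\frac{2\delta^2}{n^2}\sum_{i=1}^n\frac{1}{\epsilon_i^2}$.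
   Context: $n$ agents communicate over an undirected connected weighted graph with Laplacian $L$ and maximal weighted degree $d_{\max}$; $\mathrm{Ave}(x)=\frac1n\mathbf{1}_n^Tx$. The algorithm is $\theta(k+1)=\theta(k)-hLx(k)+S\eta(k)$, $x(k)=\theta(k)+\eta(k)$, $\theta(0)=\theta_0$, with $0<h<1/d_{\max}$. $X_{\theta_0}$ maps the noise sequence to the message sequence $\{x(k)\}_{k\ge0}$. $\mathrm{Lap}(b)$ is the zero-mean Laplace distribution with density $\frac{1}{2b}e^{-|x|/b}$. *)

theory Defs
  imports "HOL-Probability.Probability"
begin

definition weighted_graph :: "real^'n^'n \<Rightarrow> bool" where
  "weighted_graph W \<longleftrightarrow> (\<forall>i j. W$i$j = W$j$i) \<and> (\<forall>i j. 0 \<le> W$i$j) \<and> (\<forall>i. W$i$i = 0)"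

definition graph_connected :: "real^'n^'n \<Rightarrow> bool" where
  "graph_connected W \<longleftrightarrow> (\<forall>i j. (\<lambda>a b. W$a$b > 0)\<^sup>*\<^sup>* i j)"

definition wdegree :: "real^'n^'n \<Rightarrow> 'n \<Rightarrow> real" where
  "wdegree W i = (\<Sum>j\<in>UNIV. W$i$j)"

definition dmax :: "real^'n^'n \<Rightarrow> real" where
  "dmax W = Max (range (wdegree W))"

definition laplacian :: "real^'n^'n \<Rightarrow> real^'n^'n" where
  "laplacian W = (\<chi> i j. (if i = j then wdegree W i else 0) - W$i$j)"

definition Ave :: "real^'n \<Rightarrow> real" where
  "Ave x = (\<Sum>i\<in>UNIV. x$i) / real CARD('n)"

definition ones :: "real^'n" where
  "ones = (\<chi> i. 1)"

primrec theta_seq :: "real^'n^'n \<Rightarrow> real \<Rightarrow> real^'n^'n \<Rightarrow> real^'n \<Rightarrow> (nat \<Rightarrow> real^'n) \<Rightarrow> nat \<Rightarrow> real^'n" where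
  "theta_seq L h S \<theta>0 \<eta> 0 = \<theta>0"
| "theta_seq L h S \<theta>0 \<eta> (Suc k) =
     theta_seq L h S \<theta>0 \<eta> k - h *\<^sub>R (L *v (theta_seq L h S \<theta>0 \<eta> k + \<eta> k)) + S *v \<eta> k"

definition msg_seq :: "real^'n^'n \<Rightarrow> real \<Rightarrow> real^'n^'n \<Rightarrow> real^'n \<Rightarrow> (nat \<Rightarrow> real^'n) \<Rightarrow> nat \<Rightarrow> real^'n" where
  "msg_seq L h S \<theta>0 \<eta> = (\<lambda>k. theta_seq L h S \<theta>0 \<eta> k + \<eta> k)"

definition lap_density :: "real \<Rightarrow> real \<Rightarrow> real" where
  "lap_density b x = exp (- \<bar>x\<bar> / b) / (2 * b)"

definition agent_dp :: "'a measure \<Rightarrow> ('a \<Rightarrow> nat \<Rightarrow> real^'n)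
     \<Rightarrow> (real^'n \<Rightarrow> (nat \<Rightarrow> real^'n) \<Rightarrow> nat \<Rightarrow> real^'n) \<Rightarrow> real \<Rightarrow> 'n \<Rightarrow> real \<Rightarrow> bool" where
  "agent_dp M \<eta> X \<delta> i \<epsilon> \<longleftrightarrow>
     (\<forall>\<theta>1 \<theta>2 Obs. (\<forall>j. j \<noteq> i \<longrightarrow> \<theta>1$j = \<theta>2$j) \<and> \<bar>\<theta>1$i - \<theta>2$i\<bar> \<le> \<delta> \<and> Obs \<in> sets borel \<longrightarrow>
        measure M {\<omega>\<in>space M. X \<theta>1 (\<eta> \<omega>) \<in> Obs}
          \<le> exp \<epsilon> * measure M {\<omega>\<in>space M. X \<theta>2 (\<eta> \<omega>) \<in> Obs})"

end

theory Submission
  imports Defs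
begin


lemma lap_apply:
  fixes W :: "real^'n^'n"
  shows "(laplacian W *v y)$i = (\<Sum>j\<in>UNIV. W$i$j * (y$i - y$j))"
proof -
  have "(laplacian W *v y)$i = (\<Sum>j\<in>UNIV. ((if i = j then wdegree W i else 0) - W$i$j) * y$j)"
    by (simp add: matrix_vector_mult_def laplacian_def)
  also have "\<dots> = (\<Sum>j\<in>UNIV. (if i = j then wdegree W i * y$j else 0)) - (\<Sum>j\<in>UNIV. W$i$j * y$j)"
  proof -
    have "\<And>j. ((if i = j then wdegree W i else 0) - W$i$j) * y$j = (if i = j then wdegree W i * y$j else 0) - W$i$j * y$j"
      by (auto simp: algebra_simps)
    then show ?thesis by (simp add: sum_subtractf)
  qed
  also have "\<dots> = wdegree W i * y$i - (\<Sum>j\<in>UNIV. W$i$j * y$j)"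
    by simp
  also have "\<dots> = (\<Sum>j\<in>UNIV. W$i$j * (y$i - y$j))"
    by (simp add: wdegree_def sum_distrib_right right_diff_distrib sum_subtractf)
  finally show ?thesis .
qed

lemma sum_swap_sym:
  fixes W :: "real^'n^'n"
  assumes "weighted_graph W"
  shows "(\<Sum>i\<in>UNIV. \<Sum>j\<in>UNIV. W$i$j * f i j) = (\<Sum>i\<in>UNIV. \<Sum>j\<in>UNIV. W$i$j * f j i)"
proof -
  have "(\<Sum>i\<in>UNIV. \<Sum>j\<in>UNIV. W$i$j * f i j) = (\<Sum>j\<in>UNIV. \<Sum>i\<in>UNIV. W$i$j * f i j)"
    by (rule sum.swap)
  also have "\<dots> = (\<Sum>j\<in>UNIV. \<Sum>i\<in>UNIV. W$j$i * f i j)"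
    using assms by (simp add: weighted_graph_def)
  finally show ?thesis .
qed

lemma sum_lap:
  fixes W :: "real^'n^'n"
  assumes "weighted_graph W"
  shows "(\<Sum>i\<in>UNIV. (laplacian W *v y)$i) = 0"
proof -
  let ?S = "(\<Sum>i\<in>UNIV. \<Sum>j\<in>UNIV. W$i$j * (y$i - y$j))"
  have "?S = (\<Sum>i\<in>UNIV. \<Sum>j\<in>UNIV. W$i$j * (y$j - y$i))"
    using sum_swap_sym[OF assms, of "\<lambda>i j. y$i - y$j"] by simp
  also have "\<dots> = - ?S"
    by (simp add: sum_negf[symmetric] algebra_simps)
  finally have "?S = 0" by simp
  then show ?thesis by (simp add: lap_apply)
qed

lemma quad_lap:
  fixes W :: "real^'n^'n"
  assumes "weighted_graph W"
  shows "y \<bullet> (laplacian W *v y) = (\<Sum>i\<in>UNIV. \<Sum>j\<in>UNIV. W$i$j * (y$i - y$j)^2) / 2"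
proof -
  let ?A = "(\<Sum>i\<in>UNIV. \<Sum>j\<in>UNIV. W$i$j * (y$i * (y$i - y$j)))"
  have 1: "y \<bullet> (laplacian W *v y) = ?A"
    by (simp add: inner_vec_def lap_apply sum_distrib_left algebra_simps)
  have 2: "?A = (\<Sum>i\<in>UNIV. \<Sum>j\<in>UNIV. W$i$j * (y$j * (y$j - y$i)))"
    using sum_swap_sym[OF assms, of "\<lambda>i j. y$i * (y$i - y$j)"] by simp
  have "?A + ?A = (\<Sum>i\<in>UNIV. \<Sum>j\<in>UNIV. W$i$j * (y$i - y$j)^2)"
    apply (subst (2) 2)
    apply (simp add: sum.distrib[symmetric] power2_eq_square algebra_simps)
    done
  then show ?thesis using 1 by simp
qed

lemma quad_nonneg:
  fixes W :: "real^'n^'n"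
  assumes "weighted_graph W"
  shows "0 \<le> y \<bullet> (laplacian W *v y)"
  using assms unfolding quad_lap[OF assms]
  by (auto intro!: sum_nonneg mult_nonneg_nonneg simp: weighted_graph_def)

lemma dmax_ge: "wdegree W i \<le> dmax W"
  unfolding dmax_def by (rule Max_ge) auto

lemma norm_lap:
  fixes W :: "real^'n^'n"
  assumes g: "weighted_graph W"
  shows "(laplacian W *v y) \<bullet> (laplacian W *v y) \<le> 2 * dmax W * (y \<bullet> (laplacian W *v y))"
proof -
  have w0: "\<And>i j. 0 \<le> W$i$j" using g by (simp add: weighted_graph_def)
  have ci: "((laplacian W *v y)$i)^2 \<le> wdegree W i * (\<Sum>j\<in>UNIV. W$i$j * (y$i - y$j)^2)" for i
  proof -
    have "((laplacian W *v y)$i)^2 = (\<Sum>j\<in>UNIV. sqrt (W$i$j) * (sqrt (W$i$j) * (y$i - y$j)))^2"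
      using w0 by (simp add: lap_apply mult.assoc[symmetric])
    also have "\<dots> \<le> (\<Sum>j\<in>UNIV. (sqrt (W$i$j))^2) * (\<Sum>j\<in>UNIV. (sqrt (W$i$j) * (y$i - y$j))^2)"
      by (rule Cauchy_Schwarz_ineq_sum)
    also have "\<dots> = wdegree W i * (\<Sum>j\<in>UNIV. W$i$j * (y$i - y$j)^2)"
      using w0 by (simp add: wdegree_def power_mult_distrib)
    finally show ?thesis .
  qed
  have "(laplacian W *v y) \<bullet> (laplacian W *v y) = (\<Sum>i\<in>UNIV. ((laplacian W *v y)$i)^2)"
    by (simp add: inner_vec_def power2_eq_square)
  also have "\<dots> \<le> (\<Sum>i\<in>UNIV. dmax W * (\<Sum>j\<in>UNIV. W$i$j * (y$i - y$j)^2))"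
  proof (rule sum_mono)
    fix i :: 'n
    have "0 \<le> (\<Sum>j\<in>UNIV. W$i$j * (y$i - y$j)^2)" using w0 by (auto intro: sum_nonneg)
    then have "wdegree W i * (\<Sum>j\<in>UNIV. W$i$j * (y$i - y$j)^2) \<le> dmax W * (\<Sum>j\<in>UNIV. W$i$j * (y$i - y$j)^2)"
      by (intro mult_right_mono dmax_ge)
    with ci[of i] show "((laplacian W *v y)$i)^2 \<le> dmax W * (\<Sum>j\<in>UNIV. W$i$j * (y$i - y$j)^2)" by linarith
  qed
  also have "\<dots> = 2 * dmax W * (y \<bullet> (laplacian W *v y))"
    by (simp add: quad_lap[OF g] sum_distrib_left[symmetric])
  finally show ?thesis .
qed

definition Pm :: "real^'n^'n \<Rightarrow> real \<Rightarrow> real^'n \<Rightarrow> real^'n" where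
  "Pm L h v = v - h *\<^sub>R (L *v v)"

lemma norm_Pm:
  fixes W :: "real^'n^'n"
  assumes g: "weighted_graph W" and h: "0 < h" "h * dmax W < 1"
  shows "(norm (Pm (laplacian W) h y))^2 \<le> (norm y)^2 - 2 * h * (1 - h * dmax W) * (y \<bullet> (laplacian W *v y))"
proof -
  let ?L = "laplacian W *v y"
  have "(norm (Pm (laplacian W) h y))^2 = y \<bullet> y - 2 * h * (y \<bullet> ?L) + h^2 * (?L \<bullet> ?L)"
    unfolding Pm_def power2_norm_eq_inner
    by (simp add: inner_diff_left inner_diff_right inner_commute power2_eq_square algebra_simps)
  also have "\<dots> \<le> y \<bullet> y - 2 * h * (y \<bullet> ?L) + h^2 * (2 * dmax W * (y \<bullet> ?L))"
    using norm_lap[OF g, of y] by (intro add_left_mono mult_left_mono) auto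
  also have "\<dots> = (norm y)^2 - 2 * h * (1 - h * dmax W) * (y \<bullet> ?L)"
    by (simp add: power2_norm_eq_inner power2_eq_square[of h] algebra_simps)
  finally show ?thesis .
qed

lemma quad_zero:
  fixes W :: "real^'n^'n"
  assumes g: "weighted_graph W" and c: "graph_connected W"
    and q: "y \<bullet> (laplacian W *v y) = 0"
  shows "y$i = y$j"
proof -
  have w0: "\<And>i j. 0 \<le> W$i$j" using g by (simp add: weighted_graph_def)
  have "(\<Sum>i\<in>UNIV. \<Sum>j\<in>UNIV. W$i$j * (y$i - y$j)^2) = 0"
    using q by (simp add: quad_lap[OF g])
  then have "\<forall>i\<in>UNIV. (\<Sum>j\<in>UNIV. W$i$j * (y$i - y$j)^2) = 0"
    using w0 by (subst (asm) sum_nonneg_eq_0_iff) (auto intro!: sum_nonneg)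
  then have z: "\<And>a b. W$a$b * (y$a - y$b)^2 = 0"
    using w0 by (subst (asm) sum_nonneg_eq_0_iff) auto
  have e: "W$a$b > 0 \<Longrightarrow> y$a = y$b" for a b using z[of a b] by auto
  have "(\<lambda>a b. W$a$b > 0)\<^sup>*\<^sup>* i j" using c by (simp add: graph_connected_def)
  then show ?thesis
    by (induction rule: rtranclp_induct) (auto dest: e)
qed

lemma Pm_contract:
  fixes W :: "real^'n^'n"
  assumes g: "weighted_graph W" and c: "graph_connected W" and h: "0 < h" "h * dmax W < 1"
  shows "\<exists>\<rho>. 0 \<le> \<rho> \<and> \<rho> < 1 \<and> (\<forall>y. (\<Sum>i\<in>UNIV. y$i) = 0 \<longrightarrow> norm (Pm (laplacian W) h y) \<le> \<rho> * norm y)"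
proof -
  let ?K = "{y::real^'n. (\<Sum>i\<in>UNIV. y$i) = 0} \<inter> sphere 0 1"
  let ?f = "\<lambda>y. norm (Pm (laplacian W) h y)"
  have strict: "?f y < norm y" if "(\<Sum>i\<in>UNIV. y$i) = 0" "y \<noteq> 0" for y
  proof -
    have "y \<bullet> (laplacian W *v y) \<noteq> 0"
    proof
      assume q: "y \<bullet> (laplacian W *v y) = 0"
      fix i0 :: 'n
      have "\<forall>i. y$i = y$i0" using quad_zero[OF g c q] by blast
      then have yi: "\<And>i. y$i = y$i0" by blast
      have "(\<Sum>i\<in>UNIV. y$i) = (\<Sum>i::'n\<in>UNIV. y$i0)" apply (rule sum.cong) apply (rule refl) apply (rule yi) done
      then have "(\<Sum>i\<in>UNIV. y$i) = real CARD('n) * y$i0" by simp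
      then have "y$i0 = 0" using that(1) by simp
      then have "y = 0" using \<open>\<forall>i. y$i = y$i0\<close> by (simp add: vec_eq_iff)
      with that(2) show False by simp
    qed
    then have qp: "0 < y \<bullet> (laplacian W *v y)" using quad_nonneg[OF g, of y] by linarith
    have "0 < 2 * h * (1 - h * dmax W)" using h by simp
    then have "(?f y)^2 < (norm y)^2"
      using norm_Pm[OF g h, of y] qp by (smt (verit) mult_pos_pos)
    then show ?thesis by (simp add: power2_less_imp_less)
  qed
  have lin: "Pm (laplacian W) h (r *\<^sub>R y) = r *\<^sub>R Pm (laplacian W) h y" for r y
    by (simp add: Pm_def matrix_vector_mult_scaleR algebra_simps)
  show ?thesis
  proof (cases "?K = {}")
    case True
    have "y = 0" if "(\<Sum>i\<in>UNIV. y$i) = 0" for y :: "real^'n"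
    proof (rule ccontr)
      assume "y \<noteq> 0"
      then have "(1 / norm y) *\<^sub>R y \<in> ?K" using that by (simp add: sum_divide_distrib[symmetric])
      with True show False by blast
    qed
    then have "\<And>y. (\<Sum>i\<in>UNIV. y$i) = 0 \<Longrightarrow> norm (Pm (laplacian W) h y) \<le> 0 * norm y"
      by (metis Pm_def cancel_comm_monoid_add_class.diff_cancel matrix_vector_mult_0_right mult_zero_left norm_zero order_refl scale_zero_right)
    then show ?thesis by (intro exI[of _ 0]) auto
  next
    case False
    have "compact ?K"
      by (intro closed_Int_compact closed_Collect_eq continuous_intros compact_sphere)
    moreover have "continuous_on ?K ?f"
      unfolding Pm_def by (intro continuous_intros linear_continuous_on matrix_vector_mul_linear)
    ultimately obtain y0 where y0: "y0 \<in> ?K" "\<forall>y\<in>?K. ?f y \<le> ?f y0"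
      using continuous_attains_sup[OF _ False] by blast
    have "y0 \<noteq> 0" using y0(1) by auto
    then have "?f y0 < 1" using strict[of y0] y0(1) by auto
    moreover have "?f y \<le> ?f y0 * norm y" if "(\<Sum>i\<in>UNIV. y$i) = 0" for y
    proof (cases "y = 0")
      case True then show ?thesis by (simp add: Pm_def)
    next
      case False
      have "(1 / norm y) *\<^sub>R y \<in> ?K" using that False by (simp add: sum_divide_distrib[symmetric])
      then have "?f ((1 / norm y) *\<^sub>R y) \<le> ?f y0" using y0 by blast
      then have "?f y / norm y \<le> ?f y0" by (simp add: lin)
      then show ?thesis using False by (simp add: divide_le_eq mult.commute)
    qed
    ultimately show ?thesis by (intro exI[of _ "?f y0"]) auto
  qed
qed



lemma Pm_add: "Pm L h (u + v) = Pm L h u + Pm L h v"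
  by (simp add: Pm_def matrix_vector_right_distrib scaleR_add_right algebra_simps)

lemma lap_ones:
  fixes W :: "real^'n^'n"
  shows "laplacian W *v (a *\<^sub>R ones) = 0"
  by (simp add: vec_eq_iff lap_apply ones_def)

lemma Pm_ones: "Pm (laplacian W) h (a *\<^sub>R ones) = a *\<^sub>R ones"
  by (simp add: Pm_def lap_ones)

lemma sum_Pm:
  fixes W :: "real^'n^'n"
  assumes "weighted_graph W"
  shows "(\<Sum>i\<in>UNIV. Pm (laplacian W) h y $ i) = (\<Sum>i\<in>UNIV. y$i)"
proof -
  have "(\<Sum>i\<in>UNIV. Pm (laplacian W) h y $ i) = (\<Sum>i\<in>UNIV. y$i) - h * (\<Sum>i\<in>UNIV. (laplacian W *v y)$i)"
    by (simp add: Pm_def sum_subtractf sum_distrib_left)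
  then show ?thesis using sum_lap[OF assms] by simp
qed

lemma consensus:
  fixes W :: "real^'n^'n"
  assumes g: "weighted_graph W" and c: "graph_connected W" and h: "0 < h" "h * dmax W < 1"
  shows "(\<lambda>k. (Pm (laplacian W) h ^^ k) x) \<longlonglongrightarrow> (Ave x) *\<^sub>R ones"
proof -
  obtain \<rho> where r: "0 \<le> \<rho>" "\<rho> < 1" and rc: "\<And>y. (\<Sum>i\<in>UNIV. y$i) = 0 \<Longrightarrow> norm (Pm (laplacian W) h y) \<le> \<rho> * norm y"
    using Pm_contract[OF g c h] by blast
  define a where "a = Ave x"
  define y where "y = x - a *\<^sub>R ones"
  have sy: "(\<Sum>i\<in>UNIV. y$i) = 0"
    by (simp add: y_def a_def Ave_def ones_def sum_subtractf)
  have dec: "(Pm (laplacian W) h ^^ k) x = a *\<^sub>R ones + (Pm (laplacian W) h ^^ k) y" for k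
    by (induction k) (auto simp: y_def Pm_add Pm_ones)
  have sk: "(\<Sum>i\<in>UNIV. (Pm (laplacian W) h ^^ k) y $ i) = 0" for k
    by (induction k) (auto simp: sum_Pm[OF g] sy)
  have nk: "norm ((Pm (laplacian W) h ^^ k) y) \<le> \<rho> ^ k * norm y" for k
  proof (induction k)
    case (Suc k)
    have "norm ((Pm (laplacian W) h ^^ Suc k) y) \<le> \<rho> * norm ((Pm (laplacian W) h ^^ k) y)"
      using rc[OF sk[of k]] by simp
    also have "\<dots> \<le> \<rho> * (\<rho> ^ k * norm y)" using Suc r by (intro mult_left_mono) auto
    finally show ?case by simp
  qed simp
  have "(\<lambda>k. \<rho> ^ k * norm y) \<longlonglongrightarrow> 0 * norm y"
    using r by (intro tendsto_intros LIMSEQ_power_zero) auto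
  then have lim0: "(\<lambda>k. \<rho> ^ k * norm y) \<longlonglongrightarrow> 0" by simp
  have "(\<lambda>k. (Pm (laplacian W) h ^^ k) y) \<longlonglongrightarrow> 0"
  proof (rule Lim_null_comparison)
    show "\<forall>\<^sub>F k in sequentially. norm ((Pm (laplacian W) h ^^ k) y) \<le> \<rho> ^ k * norm y"
      using nk by simp
  qed (rule lim0)
  then have "(\<lambda>k. a *\<^sub>R ones + (Pm (laplacian W) h ^^ k) y) \<longlonglongrightarrow> a *\<^sub>R ones + 0"
    by (intro tendsto_intros)
  then show ?thesis by (simp add: dec a_def)
qed

lemma theta_formula:
  assumes "\<forall>k\<ge>1. e k = 0"
  shows "theta_seq L h (mat 1) \<theta>0 e (Suc k) = (Pm L h ^^ Suc k) (\<theta>0 + e 0)"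
proof (induction k)
  case 0 then show ?case by (simp add: Pm_def algebra_simps)
next
  case (Suc k)
  have "e (Suc k) = 0" using assms by simp
  with Suc show ?case by (simp add: Pm_def)
qed

lemma msg_formula:
  assumes "\<forall>k\<ge>1. e k = 0"
  shows "msg_seq L h (mat 1) \<theta>0 e = (\<lambda>k. (Pm L h ^^ k) (\<theta>0 + e 0))"
proof
  fix k show "msg_seq L h (mat 1) \<theta>0 e k = (Pm L h ^^ k) (\<theta>0 + e 0)"
  proof (cases k)
    case (Suc m)
    then show ?thesis using theta_formula[OF assms, of L h \<theta>0 m] assms by (simp add: msg_seq_def)
  qed (simp add: msg_seq_def)
qed

lemma theta_conv:
  fixes W :: "real^'n^'n"
  assumes g: "weighted_graph W" and c: "graph_connected W" and h: "0 < h" "h * dmax W < 1"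
    and e: "\<forall>k\<ge>1. e k = 0"
  shows "theta_seq (laplacian W) h (mat 1) \<theta>0 e \<longlonglongrightarrow> (Ave \<theta>0 + (\<Sum>i\<in>UNIV. e 0 $ i) / real CARD('n)) *\<^sub>R ones"
proof -
  have A: "Ave (\<theta>0 + e 0) = Ave \<theta>0 + (\<Sum>i\<in>UNIV. e 0 $ i) / real CARD('n)"
    by (simp add: Ave_def sum.distrib add_divide_distrib)
  have "(\<lambda>k. (Pm (laplacian W) h ^^ Suc k) (\<theta>0 + e 0)) \<longlonglongrightarrow> Ave (\<theta>0 + e 0) *\<^sub>R ones"
    using LIMSEQ_Suc[OF consensus[OF g c h]] .
  then have "(\<lambda>k. theta_seq (laplacian W) h (mat 1) \<theta>0 e (Suc k)) \<longlonglongrightarrow> Ave (\<theta>0 + e 0) *\<^sub>R ones"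
    by (simp only: theta_formula[OF e])
  then show ?thesis unfolding A by (rule LIMSEQ_imp_Suc)
qed



lemma lap_density_nonneg: "0 < c \<Longrightarrow> 0 \<le> lap_density c x"
  by (simp add: lap_density_def)

lemma lap_density_measurable[measurable]: "lap_density c \<in> borel_measurable borel"
  unfolding lap_density_def by measurable

lemma lap_abs_moment:
  assumes c: "0 < c" and k: "1 \<le> k"
  shows "(\<integral>\<^sup>+x. ennreal (lap_density c x * \<bar>x\<bar>^k) \<partial>lborel) = ennreal (fact k * c^k)"
proof -
  define g where "g x = lap_density c x * \<bar>x\<bar>^k" for x
  have gm[measurable]: "g \<in> borel_measurable borel" unfolding g_def by measurable
  have g0: "g 0 = 0" using k by (simp add: g_def)
  have gs: "g (-x) = g x" for x by (simp add: g_def lap_density_def)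
  have "(\<integral>\<^sup>+x. ennreal (g x) \<partial>lborel) =
      (\<integral>\<^sup>+x. ennreal (g x) * indicator {0..} x + ennreal (g x) * indicator {..<0} x \<partial>lborel)"
    by (intro nn_integral_cong) (auto split: split_indicator)
  also have "\<dots> = (\<integral>\<^sup>+x. ennreal (g x) * indicator {0..} x \<partial>lborel) + (\<integral>\<^sup>+x. ennreal (g x) * indicator {..<0} x \<partial>lborel)"
    by (rule nn_integral_add) auto
  also have "(\<integral>\<^sup>+x. ennreal (g x) * indicator {..<0} x \<partial>lborel) =
      (\<integral>\<^sup>+x. ennreal (g (0 + (-1) * x)) * indicator {..<0} (0 + (-1) * x) \<partial>lborel)"
    by (subst nn_integral_real_affine[where c="-1" and t=0]) auto
  also have "\<dots> = (\<integral>\<^sup>+x. ennreal (g x) * indicator {0..} x \<partial>lborel)"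
    using g0 by (intro nn_integral_cong) (auto simp: gs split: split_indicator)
  also have "(\<integral>\<^sup>+x. ennreal (g x) * indicator {0..} x \<partial>lborel) =
      (\<integral>\<^sup>+x. ennreal ((1/2) * (erlang_density 0 (1/c) x * x^k)) \<partial>lborel)"
    using c by (intro nn_integral_cong)
      (auto simp: g_def lap_density_def erlang_density_def split: split_indicator intro!: arg_cong[where f=ennreal])
  also have "\<dots> = (\<integral>\<^sup>+x. ennreal (1/2) * ennreal (erlang_density 0 (1/c) x * x^k) \<partial>lborel)"
    by (intro nn_integral_cong ennreal_mult') simp
  also have "\<dots> = ennreal (1/2) * (\<integral>\<^sup>+x. ennreal (erlang_density 0 (1/c) x * x^k) \<partial>lborel)"
    by (rule nn_integral_cmult) auto
  also have "\<dots> = ennreal (1/2) * ennreal (fact k * c^k)"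
    using c by (simp add: nn_integral_erlang_ith_moment power_one_over)
  finally have "(\<integral>\<^sup>+x. ennreal (g x) \<partial>lborel) = ennreal (1/2) * ennreal (fact k * c^k) + ennreal (1/2) * ennreal (fact k * c^k)" .
  also have "\<dots> = ennreal (fact k * c^k)"
  proof -
    have z: "0 \<le> fact k * c^k" using c by simp
    have "ennreal (1/2) * ennreal (fact k * c^k) = ennreal (fact k * c^k / 2)"
      by (subst ennreal_mult'[symmetric]) auto
    moreover have "ennreal (fact k * c^k / 2) + ennreal (fact k * c^k / 2) = ennreal (fact k * c^k)"
      using z by (subst ennreal_plus[symmetric]) auto
    ultimately show ?thesis by simp
  qed
  finally show ?thesis by (simp add: g_def)
qed

lemma lap_int1: "0 < c \<Longrightarrow> integrable lborel (\<lambda>x. lap_density c x * x)"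
  apply (rule integrableI_bounded)
   apply measurable
  using lap_abs_moment[of c 1]
  apply (simp add: abs_mult lap_density_nonneg)
  done

lemma lap_int2: "0 < c \<Longrightarrow> has_bochner_integral lborel (\<lambda>x. lap_density c x * x^2) (2 * c^2)"
  apply (rule has_bochner_integral_nn_integral)
     apply measurable
  using lap_abs_moment[of c 2]
  by (auto simp: lap_density_nonneg)

lemma lap_mean: "0 < c \<Longrightarrow> (\<integral>x. lap_density c x * x \<partial>lborel) = 0"
proof -
  assume c: "0 < c"
  have "(\<integral>x. lap_density c x * x \<partial>lborel) = \<bar>-1\<bar> *\<^sub>R (\<integral>x. lap_density c (0 + (-1) * x) * (0 + (-1) * x) \<partial>lborel)"
    by (rule lborel_integral_real_affine) simp
  also have "\<dots> = - (\<integral>x. lap_density c x * x \<partial>lborel)"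
    by (simp add: lap_density_def)
  finally show ?thesis by simp
qed

lemma (in prob_space) lap_rv:
  assumes c: "0 < c" and D: "distributed M lborel X (\<lambda>x. ennreal (lap_density c x))"
  shows "integrable M X" "expectation X = 0" "integrable M (\<lambda>\<omega>. X \<omega>^2)"
    "expectation (\<lambda>\<omega>. X \<omega>^2) = 2 * c^2"
proof -
  have nn: "\<And>x. 0 \<le> lap_density c x" using c by (simp add: lap_density_nonneg)
  show "integrable M X"
    using distributed_integrable[OF D, of "\<lambda>x. x"] lap_int1[OF c] nn by simp
  show "expectation X = 0"
    using distributed_integral[OF D, of "\<lambda>x. x"] lap_mean[OF c] nn by simp
  show "integrable M (\<lambda>\<omega>. X \<omega>^2)"
    using distributed_integrable[OF D, of "\<lambda>x. x^2"] lap_int2[OF c] nn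
    by (simp add: integrable.intros)
  show "expectation (\<lambda>\<omega>. X \<omega>^2) = 2 * c^2"
    using distributed_integral[OF D, of "\<lambda>x. x^2"] has_bochner_integral_integral_eq[OF lap_int2[OF c]] nn
    by simp
qed

lemma (in prob_space) var_indep_sum:
  fixes X :: "'i::finite \<Rightarrow> 'a \<Rightarrow> real"
  assumes indep: "indep_vars (\<lambda>_. borel) X UNIV"
    and int: "\<And>i. integrable M (X i)" and mean: "\<And>i. expectation (X i) = 0"
    and int2: "\<And>i. integrable M (\<lambda>\<omega>. (X i \<omega>)^2)"
    and m2: "\<And>i. expectation (\<lambda>\<omega>. (X i \<omega>)^2) = v i"
  shows "variance (\<lambda>\<omega>. A + (\<Sum>i\<in>UNIV. X i \<omega>) / N) = (\<Sum>i\<in>UNIV. v i) / N^2"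
proof -
  define S where "S \<omega> = (\<Sum>i\<in>UNIV. X i \<omega>)" for \<omega>
  have intS: "integrable M S" unfolding S_def using int by auto
  have ES: "expectation S = 0" unfolding S_def
    using int mean by (simp add: Bochner_Integration.integral_sum)
  have EY: "expectation (\<lambda>\<omega>. A + S \<omega> / N) = A"
  proof -
    have "expectation (\<lambda>\<omega>. A + S \<omega> / N) = expectation (\<lambda>\<omega>. A) + expectation (\<lambda>\<omega>. S \<omega> / N)"
      using intS by (intro Bochner_Integration.integral_add) auto
    also have "expectation (\<lambda>\<omega>. S \<omega> / N) = expectation S / N"
      by (rule integral_divide_zero)
    finally show ?thesis using ES by (simp add: prob_space)
  qed
  have prodint: "integrable M (\<lambda>\<omega>. X i \<omega> * X j \<omega>)" for i j
  proof (cases "i = j")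
    case True then show ?thesis using int2[of i] by (simp add: power2_eq_square)
  next
    case False
    have ind: "indep_vars (\<lambda>_. borel) X {i, j}" by (rule indep_vars_subset[OF indep]) auto
    have "integrable M (\<lambda>\<omega>. \<Prod>k\<in>{i,j}. X k \<omega>)"
      by (rule indep_vars_integrable[OF _ ind]) (auto simp: int)
    then show ?thesis using False by simp
  qed
  have Eprod: "expectation (\<lambda>\<omega>. X i \<omega> * X j \<omega>) = (if i = j then v i else 0)" for i j
  proof (cases "i = j")
    case True then show ?thesis using m2[of i] by (simp add: power2_eq_square)
  next
    case False
    have ind: "indep_vars (\<lambda>_. borel) X {i, j}" by (rule indep_vars_subset[OF indep]) auto
    have "expectation (\<lambda>\<omega>. \<Prod>k\<in>{i,j}. X k \<omega>) = (\<Prod>k\<in>{i,j}. expectation (X k))"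
      by (rule indep_vars_lebesgue_integral[OF _ ind]) (auto simp: int)
    then show ?thesis using False mean by simp
  qed
  have "variance (\<lambda>\<omega>. A + S \<omega> / N) = expectation (\<lambda>\<omega>. (S \<omega>)^2 / N^2)"
    unfolding EY by (simp add: power_divide)
  also have "\<dots> = expectation (\<lambda>\<omega>. (S \<omega>)^2) / N^2"
    by (rule integral_divide_zero)
  also have "expectation (\<lambda>\<omega>. (S \<omega>)^2) = expectation (\<lambda>\<omega>. \<Sum>i\<in>UNIV. \<Sum>j\<in>UNIV. X i \<omega> * X j \<omega>)"
    unfolding S_def by (simp add: power2_eq_square sum_product)
  also have "\<dots> = (\<Sum>i\<in>UNIV. \<Sum>j\<in>UNIV. expectation (\<lambda>\<omega>. X i \<omega> * X j \<omega>))"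
    using prodint by (simp add: Bochner_Integration.integral_sum)
  also have "\<dots> = (\<Sum>i\<in>UNIV. v i)"
    by (simp add: Eprod)
  finally show ?thesis by (simp add: S_def)
qed



lemma lap_shift_pt:
  assumes c: "0 < c"
  shows "lap_density c (y - d) \<le> exp (\<bar>d\<bar> / c) * lap_density c y"
proof -
  have "- \<bar>y - d\<bar> \<le> \<bar>d\<bar> + - \<bar>y\<bar>"
    using abs_triangle_ineq[of "y - d" d] by simp
  then have "(- \<bar>y - d\<bar>) / c \<le> (\<bar>d\<bar> + - \<bar>y\<bar>) / c"
    using c by (intro divide_right_mono) auto
  then have "- \<bar>y - d\<bar> / c \<le> \<bar>d\<bar> / c + - \<bar>y\<bar> / c"
    by (simp add: diff_divide_distrib)
  then have "exp (- \<bar>y - d\<bar> / c) \<le> exp (\<bar>d\<bar> / c) * exp (- \<bar>y\<bar> / c)"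
    by (simp add: exp_add[symmetric])
  then have "exp (- \<bar>y - d\<bar> / c) / (2 * c) \<le> (exp (\<bar>d\<bar> / c) * exp (- \<bar>y\<bar> / c)) / (2 * c)"
    using c by (intro divide_right_mono) auto
  then show ?thesis unfolding lap_density_def by simp
qed

lemma lap_density_measurable'[measurable]: "lap_density c \<in> borel_measurable borel"
  unfolding lap_density_def by measurable

lemma lap_shift_nn:
  assumes c: "0 < c" and H[measurable]: "H \<in> borel_measurable borel"
  shows "(\<integral>\<^sup>+y. H (y + d) \<partial>density lborel (\<lambda>x. ennreal (lap_density c x)))
      \<le> ennreal (exp (\<bar>d\<bar> / c)) * (\<integral>\<^sup>+y. H y \<partial>density lborel (\<lambda>x. ennreal (lap_density c x)))"
proof -
  have "(\<integral>\<^sup>+y. H (y + d) \<partial>density lborel (\<lambda>x. ennreal (lap_density c x)))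
      = (\<integral>\<^sup>+y. ennreal (lap_density c y) * H (y + d) \<partial>lborel)"
    by (subst nn_integral_density) auto
  also have "\<dots> = (\<integral>\<^sup>+y. ennreal (lap_density c (y - d)) * H y \<partial>lborel)"
    using nn_integral_real_affine[where c=1 and t="-d" and f="\<lambda>y. ennreal (lap_density c y) * H (y + d)"]
    by simp
  also have "\<dots> \<le> (\<integral>\<^sup>+y. ennreal (exp (\<bar>d\<bar> / c)) * (ennreal (lap_density c y) * H y) \<partial>lborel)"
  proof (rule nn_integral_mono)
    fix y :: real
    have "ennreal (lap_density c (y - d)) \<le> ennreal (exp (\<bar>d\<bar> / c) * lap_density c y)"
      using lap_shift_pt[OF c] by (rule ennreal_leI)
    also have "\<dots> = ennreal (exp (\<bar>d\<bar> / c)) * ennreal (lap_density c y)"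
      by (rule ennreal_mult') simp
    finally show "ennreal (lap_density c (y - d)) * H y \<le> ennreal (exp (\<bar>d\<bar> / c)) * (ennreal (lap_density c y) * H y)"
      by (simp add: mult.assoc[symmetric] mult_right_mono)
  qed
  also have "\<dots> = ennreal (exp (\<bar>d\<bar> / c)) * (\<integral>\<^sup>+y. ennreal (lap_density c y) * H y \<partial>lborel)"
    by (rule nn_integral_cmult) auto
  also have "(\<integral>\<^sup>+y. ennreal (lap_density c y) * H y \<partial>lborel) = (\<integral>\<^sup>+y. H y \<partial>density lborel (\<lambda>x. ennreal (lap_density c x)))"
    by (subst nn_integral_density) auto
  finally show ?thesis .
qed

lemma shift_ineq:
  fixes Lap :: "'n::finite \<Rightarrow> real measure" and i :: 'n
  assumes ps: "\<And>j. prob_space (Lap j)" and sL: "\<And>j. sets (Lap j) = sets borel"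
    and Li: "Lap i = density lborel (\<lambda>x. ennreal (lap_density ci x))" and ci: "0 < ci"
    and B: "B \<in> sets (PiM UNIV Lap)"
  shows "emeasure (PiM UNIV Lap) ((\<lambda>z. z(i := z i + d)) -` B)
      \<le> ennreal (exp (\<bar>d\<bar> / ci)) * emeasure (PiM UNIV Lap) B"
proof -
  interpret product_sigma_finite Lap
    by (rule product_sigma_finite.intro) (rule prob_space_imp_sigma_finite[OF ps])
  define I where "I = UNIV - {i}"
  have UI: "UNIV = insert i I" "i \<notin> I" "finite I" by (auto simp: I_def)
  interpret PI: finite_product_sigma_finite Lap I by standard (simp add: UI)
  have spL: "space (Lap j) = UNIV" for j using sets_eq_imp_space_eq[OF sL[of j]] by simp
  have sp: "space (PiM UNIV Lap) = UNIV" by (simp add: space_PiM spL)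
  define f :: "('n \<Rightarrow> real) \<Rightarrow> ennreal" where "f = indicator B"
  have fm[measurable]: "f \<in> borel_measurable (PiM UNIV Lap)" unfolding f_def using B by simp
  define sh :: "('n \<Rightarrow> real) \<Rightarrow> ('n \<Rightarrow> real)" where "sh z = z(i := z i + d)" for z
  have hm: "(\<lambda>z. z i + d) \<in> measurable (PiM UNIV Lap) (Lap i)"
  proof -
    have "(\<lambda>z. z i) \<in> measurable (PiM UNIV Lap) (Lap i)" by simp
    then have "(\<lambda>z. z i) \<in> borel_measurable (PiM UNIV Lap)"
      using measurable_cong_sets[OF refl sL[of i]] by blast
    then have "(\<lambda>z. z i + d) \<in> borel_measurable (PiM UNIV Lap)" by measurable
    then show ?thesis using measurable_cong_sets[OF refl sL[of i]] by blast
  qed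
  have shm: "sh \<in> measurable (PiM UNIV Lap) (PiM UNIV Lap)"
    unfolding sh_def by (rule measurable_fun_upd[where J=UNIV]) (auto intro: hm)
  have Pins: "PiM UNIV Lap = PiM (insert i I) Lap" using UI by simp
  define H where "H y = (\<integral>\<^sup>+x. f (x(i := y)) \<partial>PiM I Lap)" for y
  have updm: "(\<lambda>p. (snd p)(i := fst p)) \<in> measurable (Lap i \<Otimes>\<^sub>M PiM I Lap) (PiM UNIV Lap)"
    by (rule measurable_fun_upd[where J=I]) (auto simp: UI)
  have "(\<lambda>p. f ((snd p)(i := fst p))) \<in> borel_measurable (Lap i \<Otimes>\<^sub>M PiM I Lap)"
    using measurable_comp[OF updm fm] by (simp add: comp_def)
  then have "(\<lambda>y. \<integral>\<^sup>+x. f (x(i := y)) \<partial>PiM I Lap) \<in> borel_measurable (Lap i)"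
    using PI.borel_measurable_nn_integral_fst[of "\<lambda>p. f ((snd p)(i := fst p))" "Lap i"] by simp
  then have Hm: "H \<in> borel_measurable borel"
    unfolding H_def using measurable_cong_sets[OF sL[of i] refl] by blast
  have "emeasure (PiM UNIV Lap) (sh -` B) = emeasure (PiM UNIV Lap) (sh -` B \<inter> space (PiM UNIV Lap))"
    by (simp add: sp)
  also have "\<dots> = (\<integral>\<^sup>+z. f (sh z) \<partial>PiM UNIV Lap)"
  proof -
    have shB: "sh -` B \<in> sets (PiM UNIV Lap)" using measurable_sets[OF shm B] sp by simp
    have "(\<integral>\<^sup>+z. f (sh z) \<partial>PiM UNIV Lap) = (\<integral>\<^sup>+z. indicator (sh -` B) z \<partial>PiM UNIV Lap)"
      by (simp add: f_def indicator_vimage)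
    then show ?thesis using nn_integral_indicator[OF shB] by (simp add: sp)
  qed
  also have "\<dots> = (\<integral>\<^sup>+y. (\<integral>\<^sup>+x. f (sh (x(i := y))) \<partial>PiM I Lap) \<partial>Lap i)"
    unfolding Pins
    by (rule product_nn_integral_insert_rev) (use UI shm in \<open>auto simp: Pins[symmetric]\<close>)
  also have "\<dots> = (\<integral>\<^sup>+y. H (y + d) \<partial>Lap i)"
    by (simp add: sh_def H_def)
  also have "\<dots> \<le> ennreal (exp (\<bar>d\<bar> / ci)) * (\<integral>\<^sup>+y. H y \<partial>Lap i)"
    unfolding Li by (rule lap_shift_nn[OF ci Hm])
  also have "(\<integral>\<^sup>+y. H y \<partial>Lap i) = (\<integral>\<^sup>+z. f z \<partial>PiM UNIV Lap)"
    unfolding Pins H_def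
    by (rule product_nn_integral_insert_rev[symmetric]) (use UI in \<open>auto simp: Pins[symmetric]\<close>)
  also have "\<dots> = emeasure (PiM UNIV Lap) B"
    unfolding f_def using B by simp
  finally show ?thesis unfolding sh_def .
qed



lemma cont_Pm_pow: "continuous_on UNIV (Pm L h ^^ k)"
proof (induction k)
  case 0 then show ?case by (simp add: continuous_on_id)
next
  case (Suc k)
  have cP: "continuous_on UNIV (Pm L h)"
    unfolding Pm_def by (intro continuous_intros linear_continuous_on matrix_vector_mul_linear)
  have "continuous_on UNIV (Pm L h \<circ> (Pm L h ^^ k))"
    by (rule continuous_on_compose[OF Suc]) (rule continuous_on_subset[OF cP], simp)
  then show ?case by simp
qed

lemma vec_meas:
  fixes \<theta> :: "real^'n"
  shows "(\<lambda>z. \<theta> + vec_lambda z) \<in> borel_measurable (PiM UNIV (\<lambda>_::'n. borel))"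
proof -
  have "(\<lambda>z. (\<theta> + vec_lambda z) \<bullet> axis j 1) \<in> borel_measurable (PiM UNIV (\<lambda>_::'n. borel))" for j
  proof -
    have "(\<lambda>z. (\<theta> + vec_lambda z) \<bullet> axis j 1) = (\<lambda>z. \<theta>$j + z j)"
      by (simp add: cart_eq_inner_axis[symmetric])
    moreover have "(\<lambda>z. \<theta>$j + z j) \<in> borel_measurable (PiM UNIV (\<lambda>_::'n. borel))"
      by measurable
    ultimately show ?thesis by simp
  qed
  then show ?thesis
    by (subst borel_measurable_euclidean_space) (auto simp: Basis_vec_def Basis_real_def)
qed

lemma F_meas:
  fixes \<theta> :: "real^'n"
  shows "(\<lambda>z. (\<lambda>k. (Pm L h ^^ k) (\<theta> + vec_lambda z))) \<in> borel_measurable (PiM UNIV (\<lambda>_::'n. borel))"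
proof (rule measurable_coordinatewise_then_product)
  fix k
  show "(\<lambda>z. (Pm L h ^^ k) (\<theta> + vec_lambda z)) \<in> borel_measurable (PiM UNIV (\<lambda>_::'n. borel))"
    using measurable_comp[OF vec_meas borel_measurable_continuous_onI[OF cont_Pm_pow]]
    by (simp add: comp_def)
qed

lemma (in prob_space) dp_main:
  fixes \<eta> :: "'a \<Rightarrow> nat \<Rightarrow> real^'n" and c :: "'n \<Rightarrow> real" and L :: "real^'n^'n"
  assumes delta_pos: "0 < \<delta>" and c_pos: "\<forall>i. 0 < c i"
    and noise_later: "\<forall>\<omega>\<in>space M. \<forall>k\<ge>1. \<eta> \<omega> k = 0"
    and noise_lap: "\<forall>i. distributed M lborel (\<lambda>\<omega>. \<eta> \<omega> 0 $ i) (\<lambda>x. ennreal (lap_density (c i) x))"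
    and noise_indep: "indep_vars (\<lambda>_. borel) (\<lambda>i \<omega>. \<eta> \<omega> 0 $ i) UNIV"
  shows "agent_dp M \<eta> (msg_seq L h (mat 1)) \<delta> i (\<delta> / c i)"
  unfolding agent_dp_def
proof (intro allI impI, elim conjE)
  fix \<theta>1 \<theta>2 :: "real^'n" and Obs :: "(nat \<Rightarrow> real^'n) set"
  assume same: "\<forall>j. j \<noteq> i \<longrightarrow> \<theta>1$j = \<theta>2$j" and close: "\<bar>\<theta>1$i - \<theta>2$i\<bar> \<le> \<delta>"
    and Obs: "Obs \<in> sets borel"
  define X where "X = (\<lambda>j \<omega>. \<eta> \<omega> 0 $ j)"
  define Lap where "Lap j = distr M borel (X j)" for j
  have Xm: "X j \<in> borel_measurable M" for j
    using distributed_measurable[OF noise_lap[rule_format, of j]] measurable_cong_sets[OF refl sets_lborel]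
    unfolding X_def by blast
  have psL: "prob_space (Lap j)" for j unfolding Lap_def by (rule prob_space_distr[OF Xm])
  have sL: "sets (Lap j) = sets borel" for j unfolding Lap_def by simp
  have Li: "Lap j = density lborel (\<lambda>x. ennreal (lap_density (c j) x))" for j
  proof -
    have "Lap j = distr M lborel (X j)" unfolding Lap_def by (rule distr_cong) auto
    also have "\<dots> = density lborel (\<lambda>x. ennreal (lap_density (c j) x))"
      using distributed_distr_eq_density[OF noise_lap[rule_format, of j]] by (simp add: X_def)
    finally show ?thesis .
  qed
  have DZ: "distr M (PiM UNIV (\<lambda>_. borel)) (\<lambda>\<omega>. \<lambda>j\<in>UNIV. X j \<omega>) = PiM UNIV Lap"
    unfolding Lap_def
    using indep_vars_iff_distr_eq_PiM[of UNIV X "\<lambda>_. borel"] Xm noise_indep by (simp add: X_def)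
  define Z where "Z = (\<lambda>\<omega> j. X j \<omega>)"
  have DZ': "distr M (PiM UNIV (\<lambda>_. borel)) Z = PiM UNIV Lap" using DZ by (simp add: Z_def restrict_UNIV)
  have Zm: "Z \<in> measurable M (PiM UNIV (\<lambda>_. borel))"
    unfolding Z_def by (rule measurable_PiM_single') (auto simp: Xm space_PiM)
  have spP: "space (PiM UNIV (\<lambda>_::'n. borel::real measure)) = UNIV" by (simp add: space_PiM)
  define F where "F = (\<lambda>(\<theta>::real^'n) z. (\<lambda>k. (Pm L h ^^ k) (\<theta> + vec_lambda z)))"
  define G where "G \<theta> = F \<theta> -` Obs" for \<theta>
  have GS: "G \<theta> \<in> sets (PiM UNIV (\<lambda>_::'n. borel::real measure))" for \<theta>
    using measurable_sets[OF F_meas Obs, of L h \<theta>] spP by (simp add: G_def F_def)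
  have GS': "G \<theta> \<in> sets (PiM UNIV Lap)" for \<theta>
    using GS sets_PiM_cong[of UNIV UNIV Lap "\<lambda>_. borel"] sL by simp
  have ev: "{\<omega>\<in>space M. msg_seq L h (mat 1) \<theta> (\<eta> \<omega>) \<in> Obs} = Z -` G \<theta> \<inter> space M" for \<theta>
  proof -
    have "msg_seq L h (mat 1) \<theta> (\<eta> \<omega>) = F \<theta> (Z \<omega>)" if "\<omega> \<in> space M" for \<omega>
    proof -
      have "vec_lambda (Z \<omega>) = \<eta> \<omega> 0" by (simp add: Z_def X_def vec_eq_iff)
      then show ?thesis using msg_formula[of "\<eta> \<omega>" L h \<theta>] noise_later that by (simp add: F_def)
    qed
    then show ?thesis by (auto simp: G_def)
  qed
  have meq: "measure M {\<omega>\<in>space M. msg_seq L h (mat 1) \<theta> (\<eta> \<omega>) \<in> Obs} = measure (PiM UNIV Lap) (G \<theta>)" for \<theta>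
    unfolding ev DZ'[symmetric] by (rule measure_distr[symmetric, OF Zm GS])
  define d where "d = \<theta>1$i - \<theta>2$i"
  have Gsh: "G \<theta>1 = (\<lambda>z. z(i := z i + d)) -` G \<theta>2"
  proof -
    have "F \<theta>1 z = F \<theta>2 (z(i := z i + d))" for z
    proof -
      have "\<theta>1 + vec_lambda z = \<theta>2 + vec_lambda (z(i := z i + d))"
        using same by (auto simp: vec_eq_iff d_def)
      then show ?thesis by (simp add: F_def)
    qed
    then show ?thesis by (auto simp: G_def)
  qed
  interpret PL: prob_space "PiM UNIV Lap" by (rule prob_space_PiM) (rule psL)
  have "emeasure (PiM UNIV Lap) (G \<theta>1) \<le> ennreal (exp (\<bar>d\<bar> / c i)) * emeasure (PiM UNIV Lap) (G \<theta>2)"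
    unfolding Gsh by (rule shift_ineq[OF psL sL Li]) (use c_pos GS' in auto)
  then have "measure (PiM UNIV Lap) (G \<theta>1) \<le> exp (\<bar>d\<bar> / c i) * measure (PiM UNIV Lap) (G \<theta>2)"
    by (simp add: PL.emeasure_eq_measure ennreal_mult'[symmetric])
  also have "\<dots> \<le> exp (\<delta> / c i) * measure (PiM UNIV Lap) (G \<theta>2)"
  proof (intro mult_right_mono)
    have "\<bar>d\<bar> / c i \<le> \<delta> / c i" using close c_pos[rule_format, of i] unfolding d_def
      by (intro divide_right_mono) auto
    then show "exp (\<bar>d\<bar> / c i) \<le> exp (\<delta> / c i)" by simp
  qed simp
  finally show "measure M {\<omega>\<in>space M. msg_seq L h (mat 1) \<theta>1 (\<eta> \<omega>) \<in> Obs}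
      \<le> exp (\<delta> / c i) * measure M {\<omega>\<in>space M. msg_seq L h (mat 1) \<theta>2 (\<eta> \<omega>) \<in> Obs}"
    unfolding meq .
qed


theorem mainTheorem8:
  fixes W :: "real^'n^'n" and h \<delta> :: real and c :: "'n \<Rightarrow> real"
    and M :: "'a measure" and \<eta> :: "'a \<Rightarrow> nat \<Rightarrow> real^'n"
  assumes graph: "weighted_graph W" and conn: "graph_connected W"
    and h_pos: "0 < h" and h_bound: "h * dmax W < 1"
    and delta_pos: "0 < \<delta>"
    and c_pos: "\<forall>i. 0 < c i"
    and P: "prob_space M"
    and noise_later: "\<forall>\<omega>\<in>space M. \<forall>k\<ge>1. \<eta> \<omega> k = 0"
    and noise_lap: "\<forall>i. distributed M lborel (\<lambda>\<omega>. \<eta> \<omega> 0 $ i) (\<lambda>x. ennreal (lap_density (c i) x))"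
    and noise_indep: "prob_space.indep_vars M (\<lambda>_. borel) (\<lambda>i \<omega>. \<eta> \<omega> 0 $ i) UNIV"
  shows "(\<forall>i. agent_dp M \<eta> (msg_seq (laplacian W) h (mat 1)) \<delta> i (\<delta> / c i))
    \<and> (\<forall>\<theta>0::real^'n. \<forall>\<omega>\<in>space M.
          (theta_seq (laplacian W) h (mat 1) \<theta>0 (\<eta> \<omega>)
            \<longlonglongrightarrow> (Ave \<theta>0 + (\<Sum>i\<in>UNIV. \<eta> \<omega> 0 $ i) / real CARD('n)) *\<^sub>R ones))
    \<and> (\<forall>\<theta>0::real^'n. prob_space.variance M (\<lambda>\<omega>. Ave \<theta>0 + (\<Sum>i\<in>UNIV. \<eta> \<omega> 0 $ i) / real CARD('n))
            = 2 / real CARD('n)^2 * (\<Sum>i\<in>UNIV. (c i)^2)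
        \<and> 2 / real CARD('n)^2 * (\<Sum>i\<in>UNIV. (c i)^2)
            = 2 * \<delta>^2 / real CARD('n)^2 * (\<Sum>i\<in>UNIV. 1 / (\<delta> / c i)^2))"
proof -
  interpret prob_space M by (rule P)
  have A: "\<forall>i. agent_dp M \<eta> (msg_seq (laplacian W) h (mat 1)) \<delta> i (\<delta> / c i)"
    using dp_main[OF delta_pos c_pos noise_later noise_lap noise_indep] by blast
  have B: "\<forall>\<theta>0::real^'n. \<forall>\<omega>\<in>space M.
          (theta_seq (laplacian W) h (mat 1) \<theta>0 (\<eta> \<omega>)
            \<longlonglongrightarrow> (Ave \<theta>0 + (\<Sum>i\<in>UNIV. \<eta> \<omega> 0 $ i) / real CARD('n)) *\<^sub>R ones)"
    using theta_conv[OF graph conn h_pos h_bound] noise_later by blast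
  have C: "variance (\<lambda>\<omega>. Ave \<theta>0 + (\<Sum>i\<in>UNIV. \<eta> \<omega> 0 $ i) / real CARD('n))
            = 2 / real CARD('n)^2 * (\<Sum>i\<in>UNIV. (c i)^2)" for \<theta>0 :: "real^'n"
  proof -
    have lr: "\<And>i. integrable M (\<lambda>\<omega>. \<eta> \<omega> 0 $ i) \<and> expectation (\<lambda>\<omega>. \<eta> \<omega> 0 $ i) = 0
        \<and> integrable M (\<lambda>\<omega>. (\<eta> \<omega> 0 $ i)^2) \<and> expectation (\<lambda>\<omega>. (\<eta> \<omega> 0 $ i)^2) = 2 * (c i)^2"
      using lap_rv[OF c_pos[rule_format] noise_lap[rule_format]] by blast
    have "variance (\<lambda>\<omega>. Ave \<theta>0 + (\<Sum>i\<in>UNIV. \<eta> \<omega> 0 $ i) / real CARD('n))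
        = (\<Sum>i\<in>UNIV. 2 * (c i)^2) / (real CARD('n))^2"
      by (rule var_indep_sum[where X="\<lambda>i \<omega>. \<eta> \<omega> 0 $ i"]) (use noise_indep lr in auto)
    also have "\<dots> = 2 / real CARD('n)^2 * (\<Sum>i\<in>UNIV. (c i)^2)"
      by (simp add: sum_distrib_left[symmetric])
    finally show ?thesis .
  qed
  have D: "2 / real CARD('n)^2 * (\<Sum>i\<in>UNIV. (c i)^2)
            = 2 * \<delta>^2 / real CARD('n)^2 * (\<Sum>i\<in>UNIV. 1 / (\<delta> / c i)^2)"
  proof -
    have "(\<Sum>i\<in>UNIV. 1 / (\<delta> / c i)^2) = (\<Sum>i\<in>UNIV. (c i)^2) / \<delta>^2"
      by (simp add: sum_divide_distrib power_divide)
    then show ?thesis using delta_pos by simp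
  qed
  show ?thesis using A B C D by blast
qed

end
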